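(* Fix an integer $\ell\geq 2$ and let $X$ be a random symmetric $2\times 2$ integer matrix whose upper-triangular entries $\{X_{i,j}:i\leq j\}$ have independent and uniformly distributed reductions to $\mathbb{Z}/\ell^2\mathbb{Z}$. Then $\mathbb{O}_2(\ell,\mathbb{Q})\neq\emptyset$ if and only if the factorization of $\ell$ into powers of distinct primes is of the form $\ell=p_1^{k_1}\cdots p_r^{k_r}$ with $p_i\equiv 1\bmod 4$ for every $i\leq r$. Moreover, if $\ell$ is of this form then $\#\mathbb{O}_2(\ell,\mathbb{Q})=2^{r+3}$ and consequently $$\mathbb{E}[N_2(\ell)]=\frac{2^{r+3}}{\ell^2}.$$
   Context: The level of a rational matrix $Q$ is the least integer $\ell\geq 1$ with $\ell Q$ having integer entries. $\mathbb{O}_n(\ell,\mathbb{Q})$ denotes the set of all rational orthogonal $n\times n$ matrices with level $\ell$. For an integer matrix $X\in\mathbb{Z}^{n\times n}$, $N_n(\ell)=\#\{Q\in\mathbb{O}_n(\ell,\mathbb{Q}): Q^{T}XQ\in\mathbb{Z}^{n\times n}\}$. *)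

theory Defs
  imports "HOL-Analysis.Analysis" "HOL-Computational_Algebra.Primes"
begin

definition is_int_mat :: "rat^'n^'m \<Rightarrow> bool" where
  "is_int_mat A \<longleftrightarrow> (\<forall>i j. A $ i $ j \<in> \<int>)"

definition mat_level :: "rat^'n^'m \<Rightarrow> nat" where
  "mat_level Q = (LEAST l::nat. l \<ge> 1 \<and> is_int_mat (\<chi> i j. of_nat l * Q $ i $ j))"

definition rat_orthogonal :: "rat^'n^'n \<Rightarrow> bool" where
  "rat_orthogonal Q \<longleftrightarrow> transpose Q ** Q = mat 1"

definition O2 :: "nat \<Rightarrow> (rat^2^2) set" where
  "O2 l = {Q. rat_orthogonal Q \<and> mat_level Q = l}"

definition int_to_rat_mat :: "int^'n^'m \<Rightarrow> rat^'n^'m" where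
  "int_to_rat_mat X = (\<chi> i j. of_int (X $ i $ j))"

definition N2 :: "nat \<Rightarrow> int^2^2 \<Rightarrow> nat" where
  "N2 l X = card {Q \<in> O2 l. is_int_mat (transpose Q ** int_to_rat_mat X ** Q)}"

definition sym2 :: "int \<Rightarrow> int \<Rightarrow> int \<Rightarrow> int^2^2" where
  "sym2 a b c = (\<chi> i j. if i = 1 \<and> j = 1 then a else if i = 2 \<and> j = 2 then c else b)"

text \<open>Expectation of N_2(l) when the upper-triangular entries of X have independent
  uniform reductions mod l^2: average over the representatives {0..<l^2}^3.\<close>
definition expected_N2 :: "nat \<Rightarrow> real" where
  "expected_N2 l =
     (\<Sum>a\<in>{0..<int l ^ 2}. \<Sum>b\<in>{0..<int l ^ 2}. \<Sum>c\<in>{0..<int l ^ 2}.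
        real (N2 l (sym2 a b c))) / real l ^ 6"

end

theory Submission
  imports Defs "HOL-Number_Theory.Number_Theory"
begin



definition Sm :: "int \<Rightarrow> int set" where
  "Sm m = {t. 0 \<le> t \<and> t < m \<and> m dvd t^2 + 1}"

lemma sqrt_m1_mod_p:
  fixes p :: nat
  assumes "prime p" "p mod 4 = 1"
  shows "\<exists>t::int. int p dvd t^2 + 1"
proof -
  have p2: "2 < p" using assms prime_ge_2_nat[of p] by (cases "p = 2") auto
  have "[(Legendre (-1) p) = (-1) ^ ((p - 1) div 2)] (mod p)"
    using euler_criterion[OF assms(1) p2] by blast
  moreover have "even ((p - 1) div 2)" using assms(2) by presburger
  ultimately have c: "[(Legendre (-1) p) = 1] (mod p)" by simp
  have "QuadRes p (-1)"
  proof (rule ccontr)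
    assume nq: "\<not> QuadRes p (-1)"
    have "\<not> [-1 = 0] (mod int p)" using p2 by (simp add: cong_def zmod_minus1)
    hence "Legendre (-1) p = -1" using nq by (simp add: Legendre_def)
    with c have "[-1 = 1] (mod int p)" by simp
    hence "int p dvd 2" by (simp add: cong_iff_dvd_diff)
    hence "p dvd 2" by presburger
    thus False using p2 dvd_imp_le[of p 2] by simp
  qed
  then obtain y where "[y^2 = -1] (mod int p)" unfolding QuadRes_def by blast
  hence "int p dvd y^2 + 1" by (simp add: cong_iff_dvd_diff)
  thus ?thesis by blast
qed

lemma hensel_step:
  fixes p :: int and t :: int
  assumes "prime p" "odd p" "j \<ge> 1" "p^j dvd t^2 + 1"
  shows "\<exists>t'. p^(Suc j) dvd t'^2 + 1"
proof -
  obtain c where c: "t^2 + 1 = p^j * c" using assms(4) by blast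
  have pt: "\<not> p dvd t"
  proof
    assume "p dvd t"
    hence "p dvd t^2" by (simp add: power2_eq_square)
    moreover have "p dvd t^2 + 1" using assms(3,4) dvd_trans[of p "p^j"] by (simp add: dvd_power)
    ultimately have "p dvd 1" using dvd_add_right_iff by blast
    thus False using assms(1) not_prime_unit by blast
  qed
  have "\<not> p dvd 2 * t"
  proof
    assume "p dvd 2 * t"
    hence "p dvd 2 \<or> p dvd t" using assms(1) prime_dvd_mult_iff by blast
    moreover have "\<not> p dvd 2"
    proof
      assume "p dvd 2"
      hence "p \<le> 2" by (rule zdvd_imp_le) simp
      moreover have "p > 1" using assms(1) prime_gt_1_int by blast
      ultimately have "p = 2" by simp
      thus False using assms(2) by simp
    qed
    ultimately show False using pt by blast
  qed
  hence "coprime p (2* t)" using assms(1) by (intro prime_imp_coprime)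
  hence cop: "coprime (2* t) p" by (simp only: coprime_commute)
  obtain u where u: "[(2* t) * u = 1] (mod p)" using cong_solve_coprime_int[OF cop] by blast
  define s where "s = - c * u"
  have "[c + 2* t* s = c - c * ((2* t)* u)] (mod p)" by (simp add: s_def algebra_simps)
  also have "[c - c * ((2* t)* u) = c - c * 1] (mod p)" using u by (meson cong_diff cong_mult cong_refl)
  finally have "p dvd c + 2* t* s" by (simp add: cong_0_iff)
  then obtain d where d: "c + 2* t* s = p * d" by blast
  define t' where "t' = t + s * p^j"
  have "t'^2 + 1 = p^j * (c + 2* t* s) + s^2 * p^(2* j)"
  proof -
    have "t'^2 + 1 = (t^2 + 1) + 2* t* s* p^j + s^2 * (p^j* p^j)" by (simp add: t'_def power2_eq_square algebra_simps)
    also have "p^j* p^j = p^(2* j)" by (simp add: power_add[symmetric] mult_2)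
    finally have "t'^2 + 1 = (t^2 + 1) + 2* t* s* p^j + s^2 * p^(2* j)" .
    thus ?thesis unfolding c by (simp add: algebra_simps)
  qed
  also have "\<dots> = p^(Suc j) * (d + s^2 * p^(j - 1))"
  proof -
    have "2* j = Suc j + (j-1)" using assms(3) by simp
    hence h: "p^(2* j) = p^(Suc j) * p^(j-1)" by (simp only: power_add)
    have "p^j * (c + 2* t* s) + s^2 * p^(2* j) = p^j*(p* d) + s^2*(p^(Suc j)* p^(j-1))" by (simp only: d h)
    thus ?thesis by (simp add: algebra_simps)
  qed
  finally have "p^(Suc j) dvd t'^2 + 1" by simp
  thus ?thesis by blast
qed

lemma sqrt_m1_mod_pk:
  fixes p :: nat
  assumes "prime p" "p mod 4 = 1"
  shows "\<exists>t::int. (int p)^k dvd t^2 + 1"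
proof (induction k)
  case 0 show ?case by simp
next
  case (Suc k)
  show ?case
  proof (cases "k = 0")
    case True thus ?thesis using sqrt_m1_mod_p[OF assms] by simp
  next
    case False
    then obtain t where "(int p)^k dvd t^2 + 1" using Suc by blast
    moreover have "odd (int p)" using assms(2) by presburger
    moreover have "prime (int p)" using assms(1) by simp
    moreover have "k \<ge> 1" using False by simp
    ultimately show ?thesis using hensel_step[of "int p" k t] by blast
  qed
qed

lemma sqrt_m1_pm:
  fixes p :: int
  assumes "prime p" "odd p" "j \<ge> 1" "p^j dvd t^2 + 1" "p^j dvd s^2 + 1"
  shows "p^j dvd t - s \<or> p^j dvd t + s"
proof -
  have prod: "p^j dvd (t - s) * (t + s)"
  proof -
    have "(t - s) * (t + s) = (t^2 + 1) - (s^2 + 1)" by (simp add: power2_eq_square algebra_simps)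
    thus ?thesis using assms(4,5) dvd_diff by metis
  qed
  have pt: "\<not> p dvd t"
  proof
    assume "p dvd t"
    hence "p dvd t^2" by (simp add: power2_eq_square)
    moreover have "p dvd t^2 + 1" using assms(3,4) dvd_trans[of p "p^j"] by (simp add: dvd_power)
    ultimately have "p dvd 1" using dvd_add_right_iff by blast
    thus False using assms(1) not_prime_unit by blast
  qed
  have "\<not> (p dvd t - s \<and> p dvd t + s)"
  proof
    assume "p dvd t - s \<and> p dvd t + s"
    hence "p dvd (t - s) + (t + s)" using dvd_add by blast
    moreover have "(t - s) + (t + s) = 2 * t" by simp
    ultimately have "p dvd 2 * t" by metis
    hence "p dvd 2 \<or> p dvd t" using assms(1) prime_dvd_mult_iff by blast
    moreover have "\<not> p dvd 2"
    proof
      assume "p dvd 2"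
      hence "p \<le> 2" by (rule zdvd_imp_le) simp
      moreover have "p > 1" using assms(1) prime_gt_1_int by blast
      ultimately have "p = 2" by simp
      thus False using assms(2) by simp
    qed
    ultimately show False using pt by blast
  qed
  then consider "\<not> p dvd t - s" | "\<not> p dvd t + s" by blast
  thus ?thesis
  proof cases
    case 1
    hence "coprime (p^j) (t - s)" using assms(1) by (simp add: prime_imp_coprime)
    thus ?thesis using prod coprime_dvd_mult_right_iff by blast
  next
    case 2
    hence "coprime (p^j) (t + s)" using assms(1) by (simp add: prime_imp_coprime)
    thus ?thesis using prod coprime_dvd_mult_left_iff by blast
  qed
qed




lemma Sm_mod_eq: "m > 0 \<Longrightarrow> s \<in> Sm m \<Longrightarrow> s mod m = s"
  unfolding Sm_def by simp

lemma dvd_sq1_mod: assumes "(m::int) dvd t^2 + 1" shows "m dvd (t mod m)^2 + 1"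
proof -
  have "[(t mod m)^2 + 1 = t^2 + 1] (mod m)" by (intro cong_add cong_pow) (auto simp: cong_def)
  thus ?thesis using assms cong_dvd_iff by blast
qed

lemma card_Sm_prime_power:
  fixes p :: nat
  assumes "prime p" "p mod 4 = 1" "j \<ge> 1"
  shows "card (Sm ((int p)^j)) = 2"
proof -
  define m where "m = (int p)^j"
  have p1: "int p > 1" using assms(1) prime_gt_1_nat by simp
  have m1: "m > 1" unfolding m_def using p1 assms(3) by simp
  have oddp: "odd (int p)" using assms(2) by presburger
  hence oddm: "odd m" unfolding m_def by simp
  obtain t where t: "m dvd t^2 + 1" unfolding m_def using sqrt_m1_mod_pk[OF assms(1,2)] by blast
  define t0 where "t0 = t mod m"
  have t0S: "t0 \<in> Sm m" unfolding Sm_def t0_def using m1 dvd_sq1_mod[OF t] by simp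
  have t0nz: "t0 \<noteq> 0"
  proof
    assume "t0 = 0"
    hence "m dvd 1" using t0S unfolding Sm_def by simp
    thus False using m1 by simp
  qed
  define t1 where "t1 = m - t0"
  have t1S: "t1 \<in> Sm m"
  proof -
    have "t1^2 + 1 = m * (m - 2* t0) + (t0^2 + 1)" unfolding t1_def by (simp add: power2_eq_square algebra_simps)
    moreover have "m dvd t0^2 + 1" using t0S unfolding Sm_def by simp
    moreover have "m dvd m * (m - 2* t0) + (t0^2 + 1)" using calculation(2) dvd_add dvd_triv_left by blast
    ultimately have "m dvd t1^2 + 1" by (simp only:)
    thus ?thesis using t0S t0nz unfolding Sm_def t1_def by auto
  qed
  have ne: "t0 \<noteq> t1"
  proof
    assume "t0 = t1"
    hence "m = 2 * t0" unfolding t1_def by simp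
    thus False using oddm by simp
  qed
  have "Sm m = {t0, t1}"
  proof
    show "{t0, t1} \<subseteq> Sm m" using t0S t1S by simp
    show "Sm m \<subseteq> {t0, t1}"
    proof
      fix s assume sS: "s \<in> Sm m"
      have "m dvd s - t0 \<or> m dvd s + t0"
        using sqrt_m1_pm[of "int p" j s t0] assms t0S sS oddp unfolding Sm_def m_def by auto
      thus "s \<in> {t0, t1}"
      proof
        assume "m dvd s - t0"
        hence "s mod m = t0 mod m" by (simp add: mod_eq_dvd_iff)
        thus ?thesis using Sm_mod_eq[OF _ sS] Sm_mod_eq[OF _ t0S] m1 by simp
      next
        assume "m dvd s + t0"
        hence "m dvd s - t1" unfolding t1_def by (metis diff_diff_eq2 diff_minus_eq_add dvd_diff dvd_refl)
        hence "s mod m = t1 mod m" by (simp add: mod_eq_dvd_iff)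
        thus ?thesis using Sm_mod_eq[OF _ sS] Sm_mod_eq[OF _ t1S] m1 by simp
      qed
    qed
  qed
  thus ?thesis using ne unfolding m_def by simp
qed

lemma card_Sm_mult:
  fixes a b :: int
  assumes "a > 0" "b > 0" "coprime a b"
  shows "card (Sm (a* b)) = card (Sm a) * card (Sm b)"
proof -
  define f where "f = (\<lambda>t. (t mod a, t mod b))"
  have "bij_betw f (Sm (a* b)) (Sm a \<times> Sm b)"
  proof (rule bij_betw_imageI)
    show "inj_on f (Sm (a* b))"
    proof
      fix x y assume x: "x \<in> Sm (a* b)" and y: "y \<in> Sm (a* b)" and fxy: "f x = f y"
      have "a dvd x - y" "b dvd x - y" using fxy unfolding f_def by (auto simp: mod_eq_dvd_iff)
      hence "a * b dvd x - y" using assms(3) divides_mult by blast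
      hence "x mod (a* b) = y mod (a* b)" by (simp add: mod_eq_dvd_iff)
      thus "x = y" using Sm_mod_eq[OF _ x] Sm_mod_eq[OF _ y] assms by simp
    qed
    show "f ` Sm (a* b) = Sm a \<times> Sm b"
    proof
      show "f ` Sm (a* b) \<subseteq> Sm a \<times> Sm b"
      proof
        fix z assume "z \<in> f ` Sm (a* b)"
        then obtain t where t: "t \<in> Sm (a* b)" "z = f t" by blast
        have "a* b dvd t^2 + 1" using t unfolding Sm_def by simp
        hence "a dvd t^2+1" "b dvd t^2+1" by (auto dest: dvd_mult_left dvd_mult_right)
        thus "z \<in> Sm a \<times> Sm b" using t(2) assms dvd_sq1_mod unfolding f_def Sm_def by auto
      qed
      show "Sm a \<times> Sm b \<subseteq> f ` Sm (a* b)"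
      proof
        fix z assume z: "z \<in> Sm a \<times> Sm b"
        obtain u v where uv: "z = (u, v)" by force
        have u: "u \<in> Sm a" and v: "v \<in> Sm b" using z uv by auto
        obtain x where x: "[x = u] (mod a)" "[x = v] (mod b)"
          using binary_chinese_remainder_int[OF assms(3)] by blast
        define t where "t = x mod (a* b)"
        have ta: "t mod a = u"
          using x(1) Sm_mod_eq[OF assms(1) u] unfolding t_def cong_def
          by (simp add: mod_mod_cancel)
        have tb: "t mod b = v"
          using x(2) Sm_mod_eq[OF assms(2) v] unfolding t_def cong_def
          by (metis dvd_triv_right mod_mod_cancel)
        have "a dvd t^2 + 1"
        proof -
          have "[(t mod a)^2 + 1 = t^2 + 1] (mod a)" by (intro cong_add cong_pow) (auto simp: cong_def)
          thus ?thesis using u ta unfolding Sm_def using cong_dvd_iff by blast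
        qed
        moreover have "b dvd t^2 + 1"
        proof -
          have "[(t mod b)^2 + 1 = t^2 + 1] (mod b)" by (intro cong_add cong_pow) (auto simp: cong_def)
          thus ?thesis using v tb unfolding Sm_def using cong_dvd_iff by blast
        qed
        ultimately have "a* b dvd t^2+1" using assms(3) divides_mult by blast
        hence "t \<in> Sm (a* b)" unfolding Sm_def t_def using assms by simp
        moreover have "f t = z" using ta tb uv unfolding f_def by simp
        ultimately show "z \<in> f ` Sm (a* b)" by blast
      qed
    qed
  qed
  hence "card (Sm (a* b)) = card (Sm a \<times> Sm b)" by (rule bij_betw_same_card)
  thus ?thesis by (simp add: card_cartesian_product)
qed




lemma card_Sm_general:
  fixes n :: nat
  assumes "n > 0" "\<forall>p\<in>prime_factors n. p mod 4 = 1"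
  shows "card (Sm (int n)) = 2 ^ card (prime_factors n)"
  using assms
proof (induction n rule: less_induct)
  case (less n)
  show ?case
  proof (cases "n = 1")
    case True
    have "Sm 1 = {0}" by (auto simp: Sm_def)
    thus ?thesis using True by simp
  next
    case False
    obtain p where p: "prime p" "p dvd n" using prime_factor_nat[OF False] by blast
    define k where "k = multiplicity p n"
    obtain m where nm: "n = p^k * m" and pm: "\<not> p dvd m"
    proof -
      have "n \<noteq> 0" "\<not> is_unit p" using less.prems(1) p(1) not_prime_unit by auto
      from multiplicity_decompose'[OF this] that show thesis unfolding k_def by blast
    qed
    have k1: "k \<ge> 1" using p less.prems(1) unfolding k_def
      by (metis One_nat_def Suc_leI multiplicity_gt_zero_iff not_prime_unit neq0_conv)
    have m0: "m > 0" using nm less.prems(1) by (metis gr0I mult_0_right)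
    have pk2: "p^k \<ge> 2"
    proof -
      have "p^k \<ge> p^1" using k1 prime_gt_0_nat[OF p(1)] by (intro power_increasing) auto
      thus ?thesis using prime_ge_2_nat[OF p(1)] by simp
    qed
    have mlt: "m < n" using nm m0 pk2 by simp
    have pfn: "prime_factors n = insert p (prime_factors m)"
    proof -
      have "prime_factors n = {q. prime q \<and> q dvd n}" using less.prems(1) by (simp add: prime_factors_dvd)
      also have "\<dots> = insert p {q. prime q \<and> q dvd m}"
      proof (intro equalityI subsetI)
        fix q assume q: "q \<in> {q. prime q \<and> q dvd n}"
        hence "q dvd p^k \<or> q dvd m" using nm prime_dvd_mult_iff by auto
        hence "q dvd p \<or> q dvd m" using q prime_dvd_power by auto
        hence "q = p \<or> q dvd m" using q p(1) primes_dvd_imp_eq by auto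
        thus "q \<in> insert p {q. prime q \<and> q dvd m}" using q by auto
      next
        fix q assume "q \<in> insert p {q. prime q \<and> q dvd m}"
        thus "q \<in> {q. prime q \<and> q dvd n}" using p nm by auto
      qed
      also have "{q. prime q \<and> q dvd m} = prime_factors m" using m0 by (simp add: prime_factors_dvd)
      finally show ?thesis .
    qed
    have pnot: "p \<notin> prime_factors m" using pm by auto
    have IH: "card (Sm (int m)) = 2 ^ card (prime_factors m)"
      using less.IH[OF mlt m0] less.prems(2) pfn by auto
    have p4: "p mod 4 = 1" using less.prems(2) pfn by auto
    have cop: "coprime (int (p^k)) (int m)"
      using pm p(1) by (simp add: prime_imp_coprime coprime_power_left_iff)
    have "card (Sm (int n)) = card (Sm (int (p^k) * int m))" using nm by simp
    also have "\<dots> = card (Sm (int (p^k))) * card (Sm (int m))"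
      using cop m0 p(1) prime_gt_0_nat by (intro card_Sm_mult) auto
    also have "card (Sm (int (p^k))) = 2" using card_Sm_prime_power[OF p(1) p4 k1] by simp
    also have "card (prime_factors n) = Suc (card (prime_factors m))" using pfn pnot by simp
    ultimately show ?thesis using IH by simp
  qed
qed




definition Pm :: "int \<Rightarrow> (int \<times> int) set" where
  "Pm m = {(x,y). x^2 + y^2 = m \<and> coprime x y}"

lemma abs_le_sq_int: "\<bar>x::int\<bar> \<le> x^2"
proof (cases "x = 0")
  case False
  hence "1 \<le> \<bar>x\<bar>" by simp
  hence "\<bar>x\<bar> * 1 \<le> \<bar>x\<bar> * \<bar>x\<bar>" by (intro mult_left_mono) auto
  thus ?thesis by (simp add: power2_eq_square abs_mult_self_eq)
qed simp

lemma finite_Pm: "finite (Pm m)"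
proof -
  have "Pm m \<subseteq> {-\<bar>m\<bar>..\<bar>m\<bar>} \<times> {-\<bar>m\<bar>..\<bar>m\<bar>}"
  proof
    fix z assume "z \<in> Pm m"
    then obtain x y where z: "z = (x,y)" "x^2 + y^2 = m" unfolding Pm_def by auto
    have "\<bar>x\<bar> \<le> x^2" "\<bar>y\<bar> \<le> y^2" by (rule abs_le_sq_int)+
    moreover have "x^2 \<ge> 0" "y^2 \<ge> 0" by simp_all
    ultimately show "z \<in> {-\<bar>m\<bar>..\<bar>m\<bar>} \<times> {-\<bar>m\<bar>..\<bar>m\<bar>}" using z by auto
  qed
  thus ?thesis by (rule finite_subset) simp
qed

lemma finite_Sm: "finite (Sm m)"
  unfolding Sm_def by (rule finite_subset[of _ "{0..<m}"]) auto

lemma coprime_from_R: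
  fixes x y t m :: int
  assumes "x^2 + y^2 = m" "m > 0" "m dvd y - t* x" "m dvd t^2 + 1"
  shows "coprime x y"
proof (rule coprimeI)
  fix c assume cx: "c dvd x" and cy: "c dvd y"
  then obtain x' y' where xy: "x = c* x'" "y = c* y'" by (auto elim!: dvdE)
  define m' where "m' = x'^2 + y'^2"
  have mm: "m = c* c* m'" using assms(1) xy unfolding m'_def by (simp add: power2_eq_square algebra_simps)
  have c0: "c \<noteq> 0" using mm assms(2) by auto
  have m'0: "m' > 0"
  proof -
    have "m' \<ge> 0" unfolding m'_def by simp
    moreover have "m' \<noteq> 0" using mm assms(2) by auto
    ultimately show ?thesis by simp
  qed
  have "c*(c* m') dvd c*(y' - t* x')" using assms(3) mm xy by (simp add: algebra_simps)
  hence d1: "c* m' dvd y' - t* x'" using c0 by simp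
  have d2: "c* m' dvd t^2 + 1" using assms(4) mm by (metis dvd_mult_right mult.assoc)
  have "m' = x'^2 * (t^2 + 1) + (y' - t* x') * (y' + t* x')" unfolding m'_def by (simp add: power2_eq_square algebra_simps)
  hence "c* m' dvd m'" using d1 d2 by (metis dvd_add dvd_mult dvd_mult2)
  hence "\<bar>c* m'\<bar> \<le> \<bar>m'\<bar>" using m'0 dvd_imp_le_int[of m' "c* m'"] by linarith
  hence "\<bar>c\<bar> * m' \<le> 1 * m'" using m'0 by (simp add: abs_mult)
  hence "\<bar>c\<bar> \<le> 1" using m'0 by (simp add: mult_le_cancel_right)
  hence "\<bar>c\<bar> = 1" using c0 by simp
  thus "is_unit c" by simp
qed




lemma coprime_x_m:
  fixes x y :: int
  assumes "coprime x y"
  shows "coprime x (x^2 + y^2)"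
proof -
  have "coprime x (y^2)" using assms by simp
  hence "gcd x (y^2) = 1" by simp
  moreover have "gcd x (x* x + y^2) = gcd x (y^2)" by (rule gcd_add_mult)
  moreover have "x^2 + y^2 = x* x + y^2" by (simp add: power2_eq_square)
  ultimately show ?thesis by (simp add: coprime_iff_gcd_eq_1)
qed

lemma exists_t:
  fixes m :: int
  assumes "(x,y) \<in> Pm m" "m > 0"
  shows "\<exists>t\<in>Sm m. m dvd y - t* x"
proof -
  have m: "x^2 + y^2 = m" and cxy: "coprime x y" using assms(1) unfolding Pm_def by auto
  have cxm: "coprime x m" using coprime_x_m[OF cxy] m by simp
  obtain u where u: "[x* u = 1] (mod m)" using cong_solve_coprime_int[OF cxm] by blast
  define t where "t = (y* u) mod m"
  have "[y - t* x = y - (y* u)* x] (mod m)" unfolding t_def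
    by (intro cong_diff cong_mult cong_refl) (simp add: cong_def)
  also have "[y - (y* u)* x = y - y*1] (mod m)"
    using u by (metis cong_diff cong_mult cong_refl mult.assoc mult.commute)
  finally have R: "m dvd y - t* x" by (simp add: cong_0_iff)
  have "x^2 * (t^2 + 1) = (t* x - y) * (t* x + y) + (x^2 + y^2)" by (simp add: power2_eq_square algebra_simps)
  hence "m dvd x^2 * (t^2 + 1)" using R m
    by (metis dvd_add dvd_mult2 dvd_refl minus_diff_eq dvd_minus_iff)
  moreover have "coprime m (x^2)" using cxm by (simp add: coprime_commute)
  ultimately have "m dvd t^2 + 1" using coprime_dvd_mult_right_iff by blast
  moreover have "0 \<le> t" "t < m" unfolding t_def using assms(2) by simp_all
  ultimately show ?thesis using R unfolding Sm_def by blast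
qed

lemma unique_t:
  fixes m :: int
  assumes "(x,y) \<in> Pm m" "m > 0" "t \<in> Sm m" "t' \<in> Sm m" "m dvd y - t* x" "m dvd y - t'* x"
  shows "t = t'"
proof -
  have m: "x^2 + y^2 = m" and cxy: "coprime x y" using assms(1) unfolding Pm_def by auto
  have cxm: "coprime m x" using coprime_x_m[OF cxy] m by (simp add: coprime_commute)
  have "(y - t* x) - (y - t'* x) = (t' - t) * x" by (simp add: algebra_simps)
  hence "m dvd (t' - t) * x" using assms(5,6) by (metis dvd_diff)
  hence "m dvd t' - t" using cxm coprime_dvd_mult_left_iff by blast
  hence "t' mod m = t mod m" by (simp add: mod_eq_dvd_iff)
  thus ?thesis using Sm_mod_eq[OF assms(2,3)] Sm_mod_eq[OF assms(2,4)] by simp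
qed

lemma int_sq_sum_1:
  fixes A B :: int
  assumes "A^2 + B^2 = 1"
  shows "(A = 1 \<and> B = 0) \<or> (A = -1 \<and> B = 0) \<or> (A = 0 \<and> B = 1) \<or> (A = 0 \<and> B = -1)"
proof -
  have "\<bar>A\<bar> \<le> A^2" "\<bar>B\<bar> \<le> B^2" by (rule abs_le_sq_int)+
  moreover have "A^2 \<ge> 0" "B^2 \<ge> 0" by simp_all
  ultimately have "\<bar>A\<bar> \<le> 1" "\<bar>B\<bar> \<le> 1" using assms by linarith+
  hence "A = -1 \<or> A = 0 \<or> A = 1" "B = -1 \<or> B = 0 \<or> B = 1" by auto
  thus ?thesis using assms by (elim disjE) simp_all
qed

lemma fiber_subset:
  fixes m :: int
  assumes "(x,y) \<in> Pm m" "(x',y') \<in> Pm m" "m > 0" "m dvd t^2 + 1"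
    "m dvd y - t* x" "m dvd y' - t* x'"
  shows "(x',y') \<in> {(x,y), (y,-x), (-x,-y), (-y,x)}"
proof -
  have m: "x^2 + y^2 = m" and m': "x'^2 + y'^2 = m" using assms(1,2) unfolding Pm_def by auto
  define U where "U = x* x' + y* y'"
  define V where "V = x'* y - x* y'"
  have "U = x* x'*(t^2+1) + y*(y' - t* x') + t* x'*(y - t* x)" unfolding U_def by (simp add: power2_eq_square algebra_simps)
  hence "m dvd U" using assms(4,5,6) by (simp add: dvd_add dvd_mult)
  then obtain A where A: "U = m* A" by blast
  have "V = x'*(y - t* x) - x*(y' - t* x')" unfolding V_def by (simp add: algebra_simps)
  hence "m dvd V" using assms(5,6) by (simp add: dvd_diff dvd_mult)
  then obtain B where B: "V = m* B" by blast
  have "U^2 + V^2 = (x^2+y^2)*(x'^2+y'^2)" unfolding U_def V_def by (simp add: power2_eq_square algebra_simps)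
  hence "U^2 + V^2 = m* m" using m m' by simp
  hence "m* m*(A^2 + B^2) = m* m*1" using A B by (simp add: power2_eq_square algebra_simps)
  hence AB: "A^2 + B^2 = 1" using assms(3) by simp
  have "x* U + y* V = x'*(x^2+y^2)" unfolding U_def V_def by (simp add: power2_eq_square algebra_simps)
  hence "m * x' = x* U + y* V" using m by simp
  hence ex: "m * x' = m * (A* x + B* y)" using A B by (simp add: algebra_simps)
  have "y* U - x* V = y'*(x^2+y^2)" unfolding U_def V_def by (simp add: power2_eq_square algebra_simps)
  hence "m * y' = y* U - x* V" using m by simp
  hence ey: "m * y' = m * (A* y - B* x)" using A B by (simp add: algebra_simps)
  have ex': "x' = A* x + B* y" and ey': "y' = A* y - B* x" using ex ey assms(3) by simp_all
  from int_sq_sum_1[OF AB] show ?thesis by (elim disjE conjE) (simp_all add: ex' ey')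
qed

lemma Pm_iff: "(a,b) \<in> Pm m \<longleftrightarrow> a^2 + b^2 = m \<and> coprime a b"
  by (simp add: Pm_def)

lemma fiber_members:
  fixes m :: int
  assumes "(x,y) \<in> Pm m" "m dvd t^2 + 1" "m dvd y - t* x"
    and "(a,b) \<in> {(x,y), (y,-x), (-x,-y), (-y,x)}"
  shows "(a,b) \<in> Pm m \<and> m dvd b - t* a"
proof -
  have m: "x^2 + y^2 = m" and cxy: "coprime x y" using assms(1) unfolding Pm_def by auto
  have "x + t* y = x*(t^2+1) + t*(y - t* x)" by (simp add: power2_eq_square algebra_simps)
  hence d: "m dvd x + t* y" using assms(2,3) by (simp add: dvd_add dvd_mult)
  have f1: "m dvd (-x) - t* y"
  proof -
    have "m dvd (-1) * (x+t* y)" using d by (rule dvd_mult)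
    thus ?thesis by (simp add: algebra_simps)
  qed
  have f2: "m dvd -y - t*(-x)"
  proof -
    have "m dvd (-1) * (y - t* x)" using assms(3) by (rule dvd_mult)
    thus ?thesis by (simp add: algebra_simps)
  qed
  have f3: "m dvd x - t*(-y)" using d by simp
  have c: "coprime y (-x)" "coprime (-x) (-y)" "coprime (-y) x" using cxy by (simp_all add: coprime_commute)
  have s: "y^2 + (-x)^2 = m" "(-x)^2 + (-y)^2 = m" "(-y)^2 + x^2 = m" using m by (simp_all add: add.commute)
  from assms(4) show ?thesis
  proof (elim insertE emptyE)
    assume "(a,b) = (x,y)" thus ?thesis using assms(1,3) by simp
  next
    assume "(a,b) = (y,-x)" thus ?thesis unfolding Pm_iff using s c f1 by simp
  next
    assume "(a,b) = (-x,-y)" thus ?thesis unfolding Pm_iff using s c f2 by simp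
  next
    assume "(a,b) = (-y,x)" thus ?thesis unfolding Pm_iff using s c f3 by simp
  qed
qed

lemma card_rot:
  fixes x y :: int
  assumes "x^2 + y^2 > 0"
  shows "card {(x,y), (y,-x), (-x,-y), (-y,x)} = 4"
proof -
  have nz: "x \<noteq> 0 \<or> y \<noteq> 0" using assms by auto
  have n1: "(-x,-y) \<notin> {(-y,x)}" using nz by auto
  have n2: "(y,-x) \<notin> {(-x,-y), (-y,x)}" using nz by auto
  have n3: "(x,y) \<notin> {(y,-x), (-x,-y), (-y,x)}" using nz by auto
  have c1: "card {(-x,-y), (-y,x)} = 2" using card_insert_disjoint[OF _ n1] by simp
  have c2: "card {(y,-x), (-x,-y), (-y,x)} = 3" using card_insert_disjoint[OF _ n2] c1 by simp
  show ?thesis using card_insert_disjoint[OF _ n3] c2 by simp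
qed




lemma sq_le_from_abs: fixes u L :: int assumes "\<bar>u\<bar> \<le> L" shows "u^2 \<le> L^2"
proof -
  have "\<bar>u\<bar>^2 \<le> L^2" using assms by (intro power_mono) auto
  thus ?thesis by simp
qed

lemma sq_eq_cases: fixes u L :: int assumes "u^2 = L^2" shows "u = L \<or> u = -L"
proof -
  have "(u - L) * (u + L) = 0" using assms by (simp add: power2_eq_square algebra_simps)
  thus ?thesis by auto
qed

lemma cancel_L: fixes L w :: int assumes "L \<noteq> 0" "L* L dvd L* w \<or> L* L dvd (-L)* w" shows "L dvd w"
  using assms by auto

lemma thue:
  fixes L t :: int
  assumes L1: "L > 1" and oddL: "odd L" and tS: "t \<in> Sm (L^2)"
  shows "\<exists>x y. (x,y) \<in> Pm (L^2) \<and> L^2 dvd y - t* x"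
proof -
  define m where "m = L^2"
  have m0: "m > 0" unfolding m_def using L1 by simp
  have tm: "0 \<le> t" "t < m" "m dvd t^2 + 1" using tS unfolding Sm_def m_def by auto
  define D where "D = {0..L} \<times> {0..L}"
  define g where "g = (\<lambda>(u,v). (u - t* v) mod m)"
  have gD: "g ` D \<subseteq> {0..<m}" unfolding g_def using m0 by auto
  have cD: "card D = nat (L+1) * nat (L+1)" unfolding D_def by (simp add: card_cartesian_product)
  also have "\<dots> = nat ((L+1)*(L+1))" using L1 by (simp add: nat_mult_distrib)
  finally have cD': "card D = nat ((L+1)*(L+1))" .
  have "card {0..<m} = nat m" by simp
  moreover have "m < (L+1)*(L+1)" unfolding m_def using L1 by (simp add: power2_eq_square algebra_simps)
  ultimately have lt: "card {0..<m} < card D" using cD' m0 by simp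
  have "\<not> inj_on g D"
  proof
    assume "inj_on g D"
    hence "card D \<le> card {0..<m}" using gD by (intro card_inj_on_le) auto
    thus False using lt by simp
  qed
  then obtain a b where ab: "a \<in> D" "b \<in> D" "g a = g b" "a \<noteq> b" unfolding inj_on_def by blast
  obtain u1 v1 u2 v2 where a: "a = (u1,v1)" and b: "b = (u2,v2)" by force
  define u where "u = u1 - u2"
  define v where "v = v1 - v2"
  have bnds: "0 \<le> u1" "u1 \<le> L" "0 \<le> v1" "v1 \<le> L" "0 \<le> u2" "u2 \<le> L" "0 \<le> v2" "v2 \<le> L"
    using ab(1,2) a b unfolding D_def by auto
  have absu: "\<bar>u\<bar> \<le> L" and absv: "\<bar>v\<bar> \<le> L" unfolding u_def v_def using bnds by auto
  have nz: "u \<noteq> 0 \<or> v \<noteq> 0" using ab(4) a b unfolding u_def v_def by auto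
  have "(u1 - t* v1) mod m = (u2 - t* v2) mod m" using ab(3) a b unfolding g_def by simp
  hence "m dvd (u1 - t* v1) - (u2 - t* v2)" by (simp add: mod_eq_dvd_iff)
  moreover have "(u1 - t* v1) - (u2 - t* v2) = u - t* v" unfolding u_def v_def by (simp add: algebra_simps)
  ultimately have R: "m dvd u - t* v" by simp
  have "u^2 + v^2 = (u - t* v)*(u + t* v) + v^2 * (t^2 + 1)" by (simp add: power2_eq_square algebra_simps)
  hence "m dvd u^2 + v^2" using R tm(3) by (simp add: dvd_add dvd_mult dvd_mult2)
  then obtain k where k: "u^2 + v^2 = m* k" by blast
  have spos: "u^2 + v^2 > 0" using nz by (auto simp: add_pos_nonneg add_nonneg_pos)
  have u2: "u^2 \<le> m" "v^2 \<le> m" unfolding m_def using absu absv by (simp_all add: sq_le_from_abs)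
  have k0: "k > 0" using spos k m0 by (simp add: zero_less_mult_iff)
  have k2: "k \<le> 2"
  proof (rule ccontr)
    assume "\<not> k \<le> 2"
    hence "m * 3 \<le> m * k" using m0 by (intro mult_left_mono) auto
    thus False using k u2 m0 by linarith
  qed
  have "k \<noteq> 2"
  proof
    assume "k = 2"
    hence "u^2 + v^2 = L^2 + L^2" using k unfolding m_def by simp
    hence "u^2 = L^2" "v^2 = L^2" using u2 unfolding m_def by linarith+
    hence uL: "u = L \<or> u = -L" and vL: "v = L \<or> v = -L" using sq_eq_cases by blast+
    have L0: "L \<noteq> 0" using L1 by simp
    have mLL: "m = L* L" unfolding m_def by (simp add: power2_eq_square)
    have "L dvd 1 - t \<or> L dvd 1 + t"
    proof -
      from uL vL consider "u = L" "v = L" | "u = L" "v = -L" | "u = -L" "v = L" | "u = -L" "v = -L" by blast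
      thus ?thesis
      proof cases
        case 1
        hence "u - t* v = L*(1-t)" by (simp add: algebra_simps)
        hence "L* L dvd L*(1-t)" using R mLL by simp
        thus ?thesis using L0 by simp
      next
        case 2
        hence "u - t* v = L*(1+t)" by (simp add: algebra_simps)
        hence "L* L dvd L*(1+t)" using R mLL by simp
        thus ?thesis using L0 by simp
      next
        case 3
        hence "u - t* v = -(L*(1+t))" by (simp add: algebra_simps)
        hence "L* L dvd L*(1+t)" using R mLL by (metis dvd_minus_iff)
        thus ?thesis using L0 by simp
      next
        case 4
        hence "u - t* v = -(L*(1-t))" by (simp add: algebra_simps)
        hence "L* L dvd L*(1-t)" using R mLL by (metis dvd_minus_iff)
        thus ?thesis using L0 by simp
      qed
    qed
    hence "L dvd (1 - t) * (1 + t)" by (auto simp: dvd_mult dvd_mult2)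
    moreover have "L dvd t^2 + 1" using tm(3) mLL by (metis dvd_mult_left)
    ultimately have "L dvd (1 - t) * (1 + t) + (t^2 + 1)" by (rule dvd_add)
    moreover have "(1 - t) * (1 + t) + (t^2 + 1) = 2" by (simp add: power2_eq_square algebra_simps)
    ultimately have "L dvd 2" by simp
    hence "L \<le> 2" by (rule zdvd_imp_le) simp
    hence "L = 2" using L1 by simp
    thus False using oddL by simp
  qed
  hence "k = 1" using k0 k2 by simp
  hence s: "v^2 + u^2 = m" using k by simp
  have "coprime v u" using coprime_from_R[OF s m0 R tm(3)] .
  hence "(v,u) \<in> Pm m" using s unfolding Pm_def by simp
  thus ?thesis using R unfolding m_def by blast
qed




lemma card_filter_sum:
  assumes "finite A" shows "card {a\<in>A. P a} = (\<Sum>a\<in>A. if P a then 1 else 0::nat)"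
proof -
  have "card {a\<in>A. P a} = (\<Sum>a\<in>{a\<in>A. P a}. 1)" by (rule card_eq_sum)
  also have "\<dots> = (\<Sum>a\<in>A. if P a then 1 else 0)" by (rule sum.inter_filter[OF assms])
  finally show ?thesis .
qed

lemma card_Pm_Sm:
  fixes L :: int
  assumes L1: "L > 1" and oddL: "odd L"
  shows "card (Pm (L^2)) = 4 * card (Sm (L^2))"
proof -
  define m where "m = L^2"
  have m0: "m > 0" unfolding m_def using L1 by simp
  define R where "R = (\<lambda>t (p::int\<times>int). m dvd snd p - t * fst p)"
  have one: "card {t\<in>Sm m. R t p} = 1" if p: "p \<in> Pm m" for p
  proof -
    obtain x y where xy: "p = (x,y)" by force
    have pxy: "(x,y) \<in> Pm m" using p xy by simp
    from exists_t[OF pxy m0] obtain t where t: "t \<in> Sm m" "m dvd y - t* x" by blast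
    have "{t\<in>Sm m. R t p} = {t}"
    proof (intro equalityI subsetI)
      fix t' assume "t' \<in> {t\<in>Sm m. R t p}"
      hence "t' \<in> Sm m" "m dvd y - t'* x" unfolding R_def xy by auto
      hence "t = t'" using unique_t[OF pxy m0 t(1) _ t(2)] by blast
      thus "t' \<in> {t}" by simp
    next
      fix t' assume "t' \<in> {t}"
      thus "t' \<in> {t\<in>Sm m. R t p}" using t unfolding R_def xy by simp
    qed
    thus ?thesis by simp
  qed
  have four: "card {p\<in>Pm m. R t p} = 4" if t: "t \<in> Sm m" for t
  proof -
    obtain x y where xy: "(x,y) \<in> Pm m" "m dvd y - t* x" using thue[OF L1 oddL] t unfolding m_def by blast
    have tm: "m dvd t^2 + 1" using t unfolding Sm_def by simp
    have "{p\<in>Pm m. R t p} = {(x,y), (y,-x), (-x,-y), (-y,x)}"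
    proof (intro equalityI subsetI)
      fix p assume p: "p \<in> {p\<in>Pm m. R t p}"
      obtain a b where ab: "p = (a,b)" by force
      have h: "(a,b) \<in> Pm m" "m dvd b - t* a" using p unfolding ab R_def by simp_all
      from fiber_subset[OF xy(1) h(1) m0 tm xy(2) h(2)]
      show "p \<in> {(x,y), (y,-x), (-x,-y), (-y,x)}" unfolding ab .
    next
      fix p assume p: "p \<in> {(x,y), (y,-x), (-x,-y), (-y,x)}"
      obtain a b where ab: "p = (a,b)" by force
      have "(a,b) \<in> Pm m \<and> m dvd b - t* a" using fiber_members[OF xy(1) tm xy(2)] p unfolding ab by blast
      thus "p \<in> {p\<in>Pm m. R t p}" unfolding ab R_def by simp
    qed
    moreover have pos: "x^2 + y^2 > 0" using xy(1) m0 unfolding Pm_def by simp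
    ultimately show ?thesis using card_rot[OF pos] by (simp only:)
  qed
  have "card (Pm m) = (\<Sum>p\<in>Pm m. 1)" by simp
  also have "\<dots> = (\<Sum>p\<in>Pm m. card {t\<in>Sm m. R t p})" by (rule sum.cong) (simp_all add: one)
  also have "\<dots> = (\<Sum>p\<in>Pm m. \<Sum>t\<in>Sm m. if R t p then 1 else 0)"
    by (rule sum.cong[OF refl]) (rule card_filter_sum[OF finite_Sm])
  also have "\<dots> = (\<Sum>t\<in>Sm m. \<Sum>p\<in>Pm m. if R t p then 1 else 0)" by (rule sum.swap)
  also have "\<dots> = (\<Sum>t\<in>Sm m. card {p\<in>Pm m. R t p})"
    by (rule sum.cong[OF refl]) (rule card_filter_sum[OF finite_Pm, symmetric])
  also have "\<dots> = (\<Sum>t\<in>Sm m. 4)" by (rule sum.cong) (simp_all add: four)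
  finally show ?thesis unfolding m_def by simp
qed




definition Mk :: "rat \<Rightarrow> rat \<Rightarrow> rat \<Rightarrow> rat^2^2" where
  "Mk a b e = (\<chi> i j. if j = 1 then (if i = 1 then a else b) else (if i = 1 then - e * b else e * a))"

lemma Mk_entries [simp]:
  "Mk a b e $ 1 $ 1 = a" "Mk a b e $ 2 $ 1 = b" "Mk a b e $ 1 $ 2 = - e * b" "Mk a b e $ 2 $ 2 = e * a"
  unfolding Mk_def by simp_all

lemma mat2_eq_iff: "(A::'a^2^2) = B \<longleftrightarrow> A$1$1 = B$1$1 \<and> A$1$2 = B$1$2 \<and> A$2$1 = B$2$1 \<and> A$2$2 = B$2$2"
  by (auto simp: vec_eq_iff forall_2)

lemma orth_iff:
  "rat_orthogonal (Q::rat^2^2) \<longleftrightarrow>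
     (Q$1$1)^2 + (Q$2$1)^2 = 1 \<and> (Q$1$2)^2 + (Q$2$2)^2 = 1 \<and> Q$1$1 * Q$1$2 + Q$2$1 * Q$2$2 = 0"
  unfolding rat_orthogonal_def mat2_eq_iff
  by (simp add: matrix_matrix_mult_def transpose_def mat_def sum_2 power2_eq_square mult.commute conj_comms)


lemma orth_Mk:
  assumes "rat_orthogonal Q"
  shows "\<exists>e. (e = 1 \<or> e = -1) \<and> Q = Mk (Q$1$1) (Q$2$1) e"
proof -
  define a where "a = Q$1$1"
  define b where "b = Q$2$1"
  define c where "c = Q$1$2"
  define d where "d = Q$2$2"
  have h1: "a^2 + b^2 = 1" and h2: "c^2 + d^2 = 1" and h3: "a* c + b* d = 0"
    using assms unfolding orth_iff a_def b_def c_def d_def by auto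
  define e where "e = a* d - b* c"
  have "c = c*(a^2+b^2)" using h1 by simp
  also have "c*(a^2+b^2) = - e * b + a*(a* c + b* d)" unfolding e_def by (simp add: power2_eq_square algebra_simps)
  finally have ce: "c = - e * b" using h3 by simp
  have "d = d*(a^2+b^2)" using h1 by simp
  also have "d*(a^2+b^2) = e * a + b*(a* c + b* d)" unfolding e_def by (simp add: power2_eq_square algebra_simps)
  finally have de: "d = e * a" using h3 by simp
  have "c^2 + d^2 = e^2 * (a^2 + b^2)" using ce de by (simp add: power2_eq_square algebra_simps)
  hence "e^2 = 1" using h1 h2 by simp
  hence e1: "e = 1 \<or> e = -1" by (simp add: power2_eq_1_iff)
  have "Q = Mk a b e" unfolding mat2_eq_iff using ce de unfolding a_def b_def c_def d_def by simp
  thus ?thesis using e1 unfolding a_def b_def by blast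
qed

lemma Mk_orth:
  assumes "a^2 + b^2 = 1" "e = 1 \<or> e = -1"
  shows "rat_orthogonal (Mk a b e)"
  using assms unfolding orth_iff by (auto simp: power2_eq_square algebra_simps)

lemma int_Mk:
  assumes "e = 1 \<or> e = -1"
  shows "is_int_mat (\<chi> i j. of_nat l * Mk a b e $ i $ j) \<longleftrightarrow> of_nat l * a \<in> \<int> \<and> of_nat l * b \<in> \<int>"
  using assms unfolding is_int_mat_def by (auto simp: forall_2)

lemma level_Mk:
  assumes "e = 1 \<or> e = -1"
  shows "mat_level (Mk a b e) = (LEAST l::nat. l \<ge> 1 \<and> of_nat l * a \<in> \<int> \<and> of_nat l * b \<in> \<int>)"
  unfolding mat_level_def using int_Mk[OF assms] by simp

lemma rat_int_div:
  fixes r n :: int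
  assumes "n \<noteq> 0"
  shows "(of_int r / of_int n :: rat) \<in> \<int> \<longleftrightarrow> n dvd r"
proof
  assume "(of_int r / of_int n :: rat) \<in> \<int>"
  then obtain k where k: "(of_int r / of_int n :: rat) = of_int k" by (auto elim: Ints_cases)
  hence "(of_int r :: rat) = of_int n * of_int k" using assms by (simp add: field_simps)
  hence "r = n * k" by (metis of_int_eq_iff of_int_mult)
  thus "n dvd r" by simp
next
  assume "n dvd r"
  then obtain k where "r = n * k" by blast
  hence "(of_int r / of_int n :: rat) = of_int k" using assms by simp
  thus "(of_int r / of_int n :: rat) \<in> \<int>" by simp
qed

definition Phi :: "nat \<Rightarrow> int \<Rightarrow> int \<Rightarrow> rat \<Rightarrow> rat^2^2" where
  "Phi l x y e = Mk (of_int x / of_nat l) (of_int y / of_nat l) e"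

lemma mult_div_rat: "(of_nat k * (of_int x / of_nat l) :: rat) = of_int (int k * x) / of_int (int l)"
  by simp

lemma level_Phi:
  assumes "(x,y) \<in> Pm (int l ^ 2)" "l \<ge> 1" "e = 1 \<or> e = -1"
  shows "mat_level (Phi l x y e) = l"
proof -
  have cxy: "coprime x y" using assms(1) unfolding Pm_def by simp
  have l0: "int l \<noteq> 0" using assms(2) by simp
  show ?thesis unfolding Phi_def level_Mk[OF assms(3)]
  proof (rule Least_equality)
    show "l \<ge> 1 \<and> of_nat l * (of_int x / of_nat l) \<in> (\<int>::rat set) \<and> of_nat l * (of_int y / of_nat l) \<in> (\<int>::rat set)"
      using assms(2) by simp
  next
    fix k :: nat
    assume "k \<ge> 1 \<and> of_nat k * (of_int x / of_nat l) \<in> (\<int>::rat set) \<and> of_nat k * (of_int y / of_nat l) \<in> (\<int>::rat set)"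
    hence k1: "k \<ge> 1" and "int l dvd int k * x" "int l dvd int k * y"
      unfolding mult_div_rat using rat_int_div[OF l0] by blast+
    moreover obtain u v where "u * x + v * y = gcd x y" using bezout_int by blast
    hence uv: "u * x + v * y = 1" using cxy by simp
    have "int k = u * (int k * x) + v * (int k * y)" using uv by (metis mult.left_commute distrib_left mult.right_neutral)
    ultimately have "int l dvd int k" by (metis dvd_add dvd_mult)
    hence "l dvd k" by simp
    thus "l \<le> k" using k1 by (intro dvd_imp_le) auto
  qed
qed




lemma Phi_in_O2:
  assumes "(x,y) \<in> Pm (int l ^ 2)" "l \<ge> 1" "e = 1 \<or> e = -1"
  shows "Phi l x y e \<in> O2 l"
proof -
  have s: "x^2 + y^2 = int l ^ 2" using assms(1) unfolding Pm_def by simp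
  have "(of_int x / of_nat l :: rat)^2 + (of_int y / of_nat l)^2 = (of_int (x^2 + y^2)) / (of_nat l)^2"
    by (simp add: power_divide add_divide_distrib)
  also have "\<dots> = 1" using s assms(2) by simp
  finally have "rat_orthogonal (Phi l x y e)" unfolding Phi_def using Mk_orth assms(3) by blast
  thus ?thesis using level_Phi[OF assms] unfolding O2_def by simp
qed

lemma exists_int_multiple:
  fixes a b :: rat
  shows "\<exists>l::nat. l \<ge> 1 \<and> of_nat l * a \<in> \<int> \<and> of_nat l * b \<in> \<int>"
proof -
  obtain p q where pq: "quotient_of a = (p, q)" by force
  obtain r s where rs: "quotient_of b = (r, s)" by force
  have q0: "q > 0" using quotient_of_denom_pos[OF pq] .
  have s0: "s > 0" using quotient_of_denom_pos[OF rs] .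
  have a: "a = of_int p / of_int q" using quotient_of_div[OF pq] .
  have b: "b = of_int r / of_int s" using quotient_of_div[OF rs] .
  define l where "l = nat (q * s)"
  have l: "(of_nat l :: rat) = of_int (q * s)" unfolding l_def using q0 s0 by simp
  have "of_nat l * a = of_int (p * s)" unfolding l a using q0 by (simp add: field_simps)
  moreover have "of_nat l * b = of_int (r * q)" unfolding l b using s0 by (simp add: field_simps)
  moreover have "l \<ge> 1"
  proof -
    have "q * s > 0" using q0 s0 by simp
    hence "q * s \<ge> 1" by linarith
    thus ?thesis unfolding l_def by linarith
  qed
  ultimately show ?thesis by (metis Ints_of_int)
qed

lemma O2_Phi:
  assumes "Q \<in> O2 l" "l \<ge> 1"
  shows "\<exists>x y e. (x,y) \<in> Pm (int l ^ 2) \<and> (e = 1 \<or> e = -1) \<and> Q = Phi l x y e"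
proof -
  have orth: "rat_orthogonal Q" and lev: "mat_level Q = l" using assms(1) unfolding O2_def by auto
  obtain e where e: "e = 1 \<or> e = -1" and Qe: "Q = Mk (Q$1$1) (Q$2$1) e" using orth_Mk[OF orth] by blast
  define a where "a = Q$1$1"
  define b where "b = Q$2$1"
  define P where "P = (\<lambda>l::nat. l \<ge> 1 \<and> of_nat l * a \<in> (\<int>::rat set) \<and> of_nat l * b \<in> (\<int>::rat set))"
  have lev': "(LEAST l. P l) = l" using lev Qe level_Mk[OF e] unfolding P_def a_def b_def by metis
  have "\<exists>l. P l" unfolding P_def by (rule exists_int_multiple)
  hence Pl: "P l" using LeastI_ex[of P] lev' by simp
  have minl: "\<And>k. P k \<Longrightarrow> l \<le> k" using Least_le[of P] lev' by metis
  obtain x where x: "of_nat l * a = (of_int x :: rat)" using Pl unfolding P_def by (auto elim: Ints_cases)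
  obtain y where y: "of_nat l * b = (of_int y :: rat)" using Pl unfolding P_def by (auto elim: Ints_cases)
  have l0: "(of_nat l :: rat) \<noteq> 0" using assms(2) by simp
  have ax: "a = of_int x / of_nat l" using x l0 by (simp add: field_simps)
  have by': "b = of_int y / of_nat l" using y l0 by (simp add: field_simps)
  have ab1: "a^2 + b^2 = 1" using orth unfolding orth_iff a_def b_def by simp
  have "(of_int (x^2 + y^2) :: rat) = (of_nat l * a)^2 + (of_nat l * b)^2" using x y by simp
  also have "\<dots> = (of_nat l)^2 * (a^2 + b^2)" by (simp add: power2_eq_square algebra_simps)
  also have "\<dots> = of_int (int l ^ 2)" using ab1 by simp
  finally have s: "x^2 + y^2 = int l ^ 2" by (simp only: of_int_eq_iff)
  have "coprime x y"
  proof (rule coprimeI)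
    fix c assume cx: "c dvd x" and cy: "c dvd y"
    define k where "k = nat \<bar>c\<bar>"
    have kx: "int k dvd x" and ky: "int k dvd y" using cx cy unfolding k_def by simp_all
    have "int k ^ 2 dvd x^2 + y^2" using kx ky by (simp add: dvd_add)
    hence "int k ^ 2 dvd int l ^ 2" using s by simp
    hence kl: "int k dvd int l" using pow_divides_pow_iff[of 2] by simp
    have k0: "k \<noteq> 0" using kl assms(2) by auto
    define l' where "l' = l div k"
    have ll': "l = l' * k" unfolding l'_def using kl by simp
    have l'1: "l' \<ge> 1" using ll' assms(2) by (cases l') auto
    have "P l'"
    proof -
      have li: "int l = int l' * int k" using ll' by simp
      have "int l dvd int l' * x" unfolding li using kx by simp
      moreover have "int l dvd int l' * y" unfolding li using ky by simp
      moreover have "int l \<noteq> 0" using assms(2) by simp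
      ultimately have "(of_int (int l' * x) / of_int (int l) :: rat) \<in> \<int>"
        "(of_int (int l' * y) / of_int (int l) :: rat) \<in> \<int>" using rat_int_div by blast+
      hence "of_nat l' * a \<in> (\<int>::rat set)" "of_nat l' * b \<in> (\<int>::rat set)"
        unfolding ax by' mult_div_rat by blast+
      thus ?thesis unfolding P_def using l'1 by blast
    qed
    hence "l \<le> l'" by (rule minl)
    hence "k \<le> 1" using ll' assms(2) by (metis le_refl mult_le_cancel1 mult.commute not_less_eq_eq nat_mult_1 mult_le_mono2 le_0_eq nat_1_eq_mult_iff  less_one mult_is_0 not_less)
    hence "k = 1" using k0 by simp
    thus "is_unit c" unfolding k_def by simp
  qed
  hence "(x,y) \<in> Pm (int l ^ 2)" using s unfolding Pm_def by simp
  moreover have "Q = Phi l x y e" unfolding Phi_def using Qe ax by' unfolding a_def b_def by simp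
  ultimately show ?thesis using e by blast
qed




lemma Phi_inj:
  assumes "(x,y) \<in> Pm (int l ^ 2)" "l \<ge> 1" "Phi l x y e = Phi l x' y' e'"
  shows "x = x' \<and> y = y' \<and> e = e'"
proof -
  have l0: "(of_nat l :: rat) \<noteq> 0" using assms(2) by simp
  have eqs: "(of_int x / of_nat l :: rat) = of_int x' / of_nat l" "(of_int y / of_nat l :: rat) = of_int y' / of_nat l"
    "- e * (of_int y / of_nat l) = - e' * (of_int y' / of_nat l)" "e * (of_int x / of_nat l) = e' * (of_int x' / of_nat l)"
    using assms(3) unfolding Phi_def mat2_eq_iff by simp_all
  have xx: "x = x'" using eqs(1) l0 by simp
  have yy: "y = y'" using eqs(2) l0 by simp
  have "x \<noteq> 0 \<or> y \<noteq> 0" using assms(1) assms(2) unfolding Pm_def by auto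
  hence "e = e'" using eqs(3,4) xx yy l0 by auto
  thus ?thesis using xx yy by simp
qed

lemma card_O2:
  assumes "l \<ge> 1"
  shows "card (O2 l) = 2 * card (Pm (int l ^ 2))"
proof -
  define F where "F = (\<lambda>(p::int\<times>int, e::rat). Phi l (fst p) (snd p) e)"
  define D where "D = Pm (int l ^ 2) \<times> {1, -1::rat}"
  have "O2 l = F ` D"
  proof (intro equalityI subsetI)
    fix Q assume "Q \<in> O2 l"
    then obtain x y e where "(x,y) \<in> Pm (int l ^ 2)" "e = 1 \<or> e = -1" "Q = Phi l x y e"
      using O2_Phi assms by blast
    thus "Q \<in> F ` D" unfolding F_def D_def by (auto intro!: image_eqI[where x="((x,y),e)"])
  next
    fix Q assume "Q \<in> F ` D"
    then obtain pe where pe: "pe \<in> D" "Q = F pe" by blast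
    obtain x y e where xye: "pe = ((x,y),e)" by (metis prod.collapse)
    have "(x,y) \<in> Pm (int l ^ 2)" "e = 1 \<or> e = -1" "Q = Phi l x y e"
      using pe unfolding xye F_def D_def by auto
    thus "Q \<in> O2 l" using Phi_in_O2 assms by blast
  qed
  moreover have "inj_on F D"
  proof (rule inj_onI)
    fix a b assume "a \<in> D" "b \<in> D" "F a = F b"
    moreover obtain x y e where a: "a = ((x,y),e)" by (metis prod.collapse)
    moreover obtain x' y' e' where b: "b = ((x',y'),e')" by (metis prod.collapse)
    ultimately show "a = b" using Phi_inj[of x y l e x' y' e'] assms unfolding F_def D_def by auto
  qed
  ultimately have "card (O2 l) = card D" by (simp add: card_image)
  also have "\<dots> = card (Pm (int l ^ 2)) * 2" unfolding D_def by (simp add: card_cartesian_product)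
  finally show ?thesis by simp
qed

lemma no_sqrt_m1_3mod4:
  fixes p :: nat and t :: int
  assumes "prime p" "p mod 4 = 3" "int p dvd t^2 + 1"
  shows False
proof -
  have p2: "p > 2" using assms(1,2) prime_ge_2_nat[OF assms(1)] by (cases "p = 2") auto
  have pt: "\<not> int p dvd t"
  proof
    assume "int p dvd t"
    hence "int p dvd t^2" by (simp add: power2_eq_square)
    hence "int p dvd 1" using assms(3) dvd_add_right_iff by blast
    thus False using p2 by simp
  qed
  define t' where "t' = nat (t mod int p)"
  have tt': "int t' = t mod int p" unfolding t'_def using p2 by simp
  have "\<not> p dvd t'"
  proof
    assume "p dvd t'"
    hence "int p dvd t mod int p" using tt' by (metis int_dvd_int_iff)
    thus False using pt by (simp add: dvd_mod_iff)
  qed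
  hence "[t' ^ (p - 1) = 1] (mod p)" using fermat_theorem[OF assms(1)] by blast
  hence "[int (t' ^ (p - 1)) = int 1] (mod int p)" by (simp only: cong_int_iff)
  hence "[int t' ^ (p - 1) = 1] (mod int p)" by simp
  moreover have "[int t' = t] (mod int p)" unfolding tt' cong_def by simp
  ultimately have c1: "[t ^ (p - 1) = 1] (mod int p)" by (meson cong_pow cong_sym cong_trans)
  define k where "k = (p - 1) div 2"
  have pk: "p - 1 = 2 * k" and ko: "odd k" unfolding k_def using assms(2) by presburger+
  have "[t^2 = -1] (mod int p)" using assms(3) by (simp add: cong_iff_dvd_diff)
  hence "[(t^2)^k = (-1)^k] (mod int p)" by (rule cong_pow)
  hence "[t^(p-1) = -1] (mod int p)" using ko unfolding pk by (simp add: power_mult)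
  hence "[-1 = 1] (mod int p)" using c1 by (meson cong_sym cong_trans)
  hence "int p dvd 2" by (simp add: cong_iff_dvd_diff)
  hence "p dvd 2" by presburger
  thus False using p2 dvd_imp_le[of p 2] by simp
qed

lemma no_sqrt_m1_4:
  fixes t :: int
  assumes "4 dvd t^2 + 1"
  shows False
proof -
  have "((t mod 4)^2 + 1) mod 4 = ((t mod 4)^2 mod 4 + 1) mod 4" by (simp add: mod_add_left_eq)
  also have "(t mod 4)^2 mod 4 = t^2 mod 4" by (rule power_mod)
  also have "(t^2 mod 4 + 1) mod 4 = (t^2 + 1) mod 4" by (simp add: mod_add_left_eq)
  finally have "(t^2 + 1) mod 4 = ((t mod 4)^2 + 1) mod 4" by simp
  moreover have "t mod 4 \<in> {0,1,2,3}" by auto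
  ultimately have "(t^2 + 1) mod 4 \<noteq> 0" by (auto simp: power2_eq_square)
  thus False using assms by simp
qed




lemma pf_sq: "prime_factors (l^2) = prime_factors (l::nat)"
proof (cases "l = 0")
  case True thus ?thesis by simp
next
  case False
  hence "prime_factors (l^2) = {p. prime p \<and> p dvd l^2}" "prime_factors l = {p. prime p \<and> p dvd l}"
    by (simp_all add: prime_factors_dvd)
  moreover have "\<And>p. prime p \<Longrightarrow> p dvd l^2 \<longleftrightarrow> p dvd l" by (simp add: prime_dvd_power_iff)
  ultimately show ?thesis by auto
qed

lemma O2_nonempty_imp:
  assumes "l \<ge> 2" "O2 l \<noteq> {}"
  shows "\<forall>p\<in>prime_factors l. p mod 4 = 1"
proof
  fix p assume pp: "p \<in> prime_factors l"
  hence p: "prime p" "p dvd l" by auto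
  obtain Q where "Q \<in> O2 l" using assms(2) by blast
  then obtain x y e where xy: "(x,y) \<in> Pm (int l ^ 2)" using O2_Phi assms(1) by fastforce
  have m0: "int l ^ 2 > 0" using assms(1) by simp
  obtain t where t: "t \<in> Sm (int l ^ 2)" using exists_t[OF xy m0] by blast
  have lt: "int l ^ 2 dvd t^2 + 1" using t unfolding Sm_def by simp
  have "int p dvd int l" using p(2) by simp
  hence pl2: "int p ^ 2 dvd int l ^ 2" by simp
  have "int p dvd int l ^ 2" using \<open>int p dvd int l\<close> by (simp add: dvd_power_iff_le power2_eq_square dvd_mult2)
  hence pt: "int p dvd t^2 + 1" using lt dvd_trans by blast
  show "p mod 4 = 1"
  proof (cases "p = 2")
    case True
    hence "4 dvd t^2 + 1" using pl2 lt dvd_trans[of 4 "int l ^ 2"] by simp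
    thus ?thesis using no_sqrt_m1_4 by blast
  next
    case False
    hence "p > 2" using prime_ge_2_nat[OF p(1)] by simp
    hence "odd p" using p(1) prime_odd_nat by blast
    hence "p mod 4 = 1 \<or> p mod 4 = 3" by presburger
    thus ?thesis using no_sqrt_m1_3mod4[OF p(1) _ pt] by blast
  qed
qed

lemma card_O2_main:
  assumes "l \<ge> 2" "\<forall>p\<in>prime_factors l. p mod 4 = 1"
  shows "card (O2 l) = 2 ^ (card (prime_factors l) + 3)"
proof -
  have "2 \<notin> prime_factors l" using assms(2) by fastforce
  hence "\<not> 2 dvd l" using assms(1) by (auto simp: in_prime_factors_iff)
  hence oddL: "odd (int l)" by simp
  have L1: "int l > 1" using assms(1) by simp
  have "card (O2 l) = 2 * card (Pm (int l ^ 2))" using card_O2 assms(1) by simp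
  also have "\<dots> = 2 * (4 * card (Sm (int l ^ 2)))" using card_Pm_Sm[OF L1 oddL] by simp
  also have "Sm (int l ^ 2) = Sm (int (l^2))" by simp
  also have "card (Sm (int (l^2))) = 2 ^ card (prime_factors (l^2))"
    using assms pf_sq by (intro card_Sm_general) auto
  also have "prime_factors (l^2) = prime_factors l" by (rule pf_sq)
  finally show ?thesis by (simp add: power_add)
qed




lemma prod_entries:
  fixes a b e :: rat and A B C :: int
  defines "P \<equiv> transpose (Mk a b e) ** int_to_rat_mat (sym2 A B C) ** Mk a b e"
  shows "P$1$1 = a^2* of_int A + 2* a* b* of_int B + b^2* of_int C"
    "P$1$2 = e*(-a* b* of_int A + (a^2-b^2)* of_int B + a* b* of_int C)"
    "P$2$1 = e*(-a* b* of_int A + (a^2-b^2)* of_int B + a* b* of_int C)"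
    "P$2$2 = e^2*(b^2* of_int A - 2* a* b* of_int B + a^2* of_int C)"
  unfolding P_def
  by (simp_all add: matrix_matrix_mult_def transpose_def int_to_rat_mat_def sym2_def sum_2 algebra_simps power2_eq_square)


lemma int_cond:
  assumes xy: "(x,y) \<in> Pm (int l ^ 2)" and l1: "l \<ge> 1" and e: "e = 1 \<or> e = -1"
  shows "is_int_mat (transpose (Phi l x y e) ** int_to_rat_mat (sym2 A B C) ** Phi l x y e)
         \<longleftrightarrow> int l ^ 2 dvd x*(A - C) + 2* y* B"
proof -
  define M where "M = int l ^ 2"
  have M0: "M \<noteq> 0" unfolding M_def using l1 by simp
  have s: "x^2 + y^2 = M" using xy unfolding Pm_def M_def by simp
  have cxy: "coprime x y" using xy unfolding Pm_def by simp
  have cM: "coprime M x" using coprime_x_m[OF cxy] s by (simp add: coprime_commute)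
  define Lf where "Lf = x*(A - C) + 2* y* B"
  define a where "a = (of_int x / of_nat l :: rat)"
  define b where "b = (of_int y / of_nat l :: rat)"
  define P where "P = transpose (Phi l x y e) ** int_to_rat_mat (sym2 A B C) ** Phi l x y e"
  have PM: "P = transpose (Mk a b e) ** int_to_rat_mat (sym2 A B C) ** Mk a b e"
    unfolding P_def Phi_def a_def b_def ..
  have lM: "(of_int M :: rat) = of_nat l * of_nat l" unfolding M_def by (simp add: power2_eq_square)
  have l0: "(of_nat l :: rat) \<noteq> 0" using l1 by simp
  have e2: "e^2 = 1" using e by auto
  have P11: "P$1$1 = of_int (x* Lf + C* M) / of_int M"
  proof -
    have "P$1$1 = a^2 * of_int A + 2* a* b * of_int B + b^2 * of_int C" unfolding PM by (rule prod_entries)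
    also have "\<dots> = of_int (x^2* A + 2* x* y* B + y^2* C) / of_int M"
      unfolding a_def b_def lM using l0 by (simp add: field_simps power2_eq_square)
    also have "x^2* A + 2* x* y* B + y^2* C = x* Lf + C*(x^2+y^2)" unfolding Lf_def by (simp add: power2_eq_square algebra_simps)
    finally show ?thesis using s by simp
  qed
  have P12: "P$1$2 = e * (of_int (-y* Lf + B* M) / of_int M)"
  proof -
    have "P$1$2 = e*(-a* b * of_int A + (a^2-b^2) * of_int B + a* b * of_int C)" unfolding PM by (rule prod_entries)
    also have "\<dots> = e * (of_int (-x* y* A + (x^2-y^2)* B + x* y* C) / of_int M)"
      unfolding a_def b_def lM using l0 by (simp add: field_simps power2_eq_square)
    also have "-x* y* A + (x^2-y^2)* B + x* y* C = -y* Lf + B*(x^2+y^2)" unfolding Lf_def by (simp add: power2_eq_square algebra_simps)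
    finally show ?thesis using s by simp
  qed
  have P21: "P$2$1 = P$1$2" unfolding PM using prod_entries(2,3) by metis
  have P22: "P$2$2 = of_int (-x* Lf + A* M) / of_int M"
  proof -
    have "P$2$2 = e^2*(b^2 * of_int A - 2* a* b * of_int B + a^2 * of_int C)" unfolding PM by (rule prod_entries)
    also have "\<dots> = of_int (y^2* A - 2* x* y* B + x^2* C) / of_int M"
      unfolding a_def b_def lM e2 using l0 by (simp add: field_simps power2_eq_square)
    also have "y^2* A - 2* x* y* B + x^2* C = -x* Lf + A*(x^2+y^2)" unfolding Lf_def by (simp add: power2_eq_square algebra_simps)
    finally show ?thesis using s by simp
  qed
  have eZ: "\<And>r::rat. e * r \<in> \<int> \<longleftrightarrow> r \<in> \<int>" using e by auto
  have "is_int_mat P \<longleftrightarrow> P$1$1 \<in> \<int> \<and> P$1$2 \<in> \<int> \<and> P$2$1 \<in> \<int> \<and> P$2$2 \<in> \<int>"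
    unfolding is_int_mat_def by (auto simp: forall_2)
  also have "\<dots> \<longleftrightarrow> M dvd x* Lf + C* M \<and> M dvd -y* Lf + B* M \<and> M dvd -x* Lf + A* M"
    unfolding P21 P11 P12 P22 eZ rat_int_div[OF M0] by blast
  also have "\<dots> \<longleftrightarrow> M dvd x* Lf \<and> M dvd y* Lf"
  proof -
    have d1: "M dvd x* Lf + C* M \<longleftrightarrow> M dvd x* Lf" by (rule dvd_add_left_iff) simp
    have "M dvd -y* Lf + B* M \<longleftrightarrow> M dvd -y* Lf" by (rule dvd_add_left_iff) simp
    hence d2: "M dvd -y* Lf + B* M \<longleftrightarrow> M dvd y* Lf" by simp
    have "M dvd -x* Lf + A* M \<longleftrightarrow> M dvd -x* Lf" by (rule dvd_add_left_iff) simp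
    hence d3: "M dvd -x* Lf + A* M \<longleftrightarrow> M dvd x* Lf" by simp
    show ?thesis using d1 d2 d3 by blast
  qed
  also have "\<dots> \<longleftrightarrow> M dvd Lf" using cM by (auto simp: coprime_dvd_mult_right_iff)
  finally show ?thesis unfolding P_def M_def Lf_def .
qed




lemma unique_A:
  fixes x M K :: int
  assumes cop: "coprime x M" and M0: "M > 0"
  shows "card {A \<in> {0..<M}. M dvd x* A + K} = 1"
proof -
  obtain u where u: "[x* u = 1] (mod M)" using cong_solve_coprime_int[OF cop] by blast
  define A0 where "A0 = (-K* u) mod M"
  have "[x* A0 + K = x*(-K* u) + K] (mod M)" unfolding A0_def
    by (intro cong_add cong_mult cong_refl) (simp add: cong_def)
  also have "x*(-K* u) + K = -K*(x* u) + K" by (simp add: algebra_simps)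
  also have "[-K*(x* u) + K = -K*1 + K] (mod M)" using u by (intro cong_add cong_mult cong_refl)
  finally have dA0: "M dvd x* A0 + K" by (simp add: cong_0_iff)
  have A0r: "0 \<le> A0" "A0 < M" unfolding A0_def using M0 by simp_all
  have "{A \<in> {0..<M}. M dvd x* A + K} = {A0}"
  proof (intro equalityI subsetI)
    fix A assume "A \<in> {A \<in> {0..<M}. M dvd x* A + K}"
    hence A: "0 \<le> A" "A < M" "M dvd x* A + K" by auto
    have "(x* A + K) - (x* A0 + K) = x*(A - A0)" by (simp add: algebra_simps)
    hence "M dvd x*(A - A0)" using A(3) dA0 by (metis dvd_diff)
    hence "M dvd A - A0" using cop by (simp add: coprime_commute coprime_dvd_mult_right_iff)
    hence "A mod M = A0 mod M" by (simp add: mod_eq_dvd_iff)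
    hence "A = A0" using A A0r by simp
    thus "A \<in> {A0}" by simp
  next
    fix A assume "A \<in> {A0}"
    thus "A \<in> {A \<in> {0..<M}. M dvd x* A + K}" using dA0 A0r by simp
  qed
  thus ?thesis by simp
qed

lemma real_sum_ind:
  assumes "finite A"
  shows "(\<Sum>a\<in>A. if P a then 1 else 0::real) = real (card {a\<in>A. P a})"
proof -
  have "(\<Sum>a\<in>A. if P a then 1 else 0::real) = (\<Sum>a\<in>{a\<in>A. P a}. 1)"
    by (rule sum.inter_filter[OF assms, symmetric])
  also have "\<dots> = real (card {a\<in>A. P a})" by simp
  finally show ?thesis .
qed

lemma count_Q:
  fixes x y M :: int
  assumes cop: "coprime x M" and M0: "M > 0"
  shows "(\<Sum>A\<in>{0..<M}. \<Sum>B\<in>{0..<M}. \<Sum>C\<in>{0..<M}. (if M dvd x*(A-C) + 2* y* B then 1 else 0::real))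
         = of_int M ^ 2"
proof -
  define S where "S = {0..<M}"
  define f where "f = (\<lambda>A B C. (if M dvd x*(A-C) + 2* y* B then 1 else 0::real))"
  have "(\<Sum>A\<in>S. \<Sum>B\<in>S. \<Sum>C\<in>S. f A B C) = (\<Sum>B\<in>S. \<Sum>A\<in>S. \<Sum>C\<in>S. f A B C)"
    by (rule sum.swap)
  also have "\<dots> = (\<Sum>B\<in>S. \<Sum>C\<in>S. \<Sum>A\<in>S. f A B C)"
    by (rule sum.cong[OF refl], rule sum.swap)
  also have "\<dots> = (\<Sum>B\<in>S. \<Sum>C\<in>S. 1)"
  proof (rule sum.cong[OF refl], rule sum.cong[OF refl])
    fix B C
    have "(\<Sum>A\<in>S. f A B C) = real (card {A\<in>S. M dvd x*(A-C) + 2* y* B})"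
      unfolding f_def S_def by (rule real_sum_ind) simp
    also have "{A\<in>S. M dvd x*(A-C) + 2* y* B} = {A\<in>{0..<M}. M dvd x* A + (2* y* B - x* C)}"
      unfolding S_def by (simp add: algebra_simps)
    also have "card \<dots> = 1" using unique_A[OF cop M0] .
    finally show "(\<Sum>A\<in>S. f A B C) = 1" by simp
  qed
  also have "\<dots> = real (nat M) * real (nat M)"
  proof -
    have cS: "card S = nat M" unfolding S_def by simp
    show ?thesis by (simp add: cS)
  qed
  also have "\<dots> = of_int M ^ 2"
  proof -
    have h: "real (nat M) = real_of_int M" by (rule of_nat_nat) (use M0 in linarith)
    show ?thesis unfolding h by (simp add: power2_eq_square)
  qed
  finally show ?thesis unfolding S_def f_def .
qed

lemma swap4:
  "(\<Sum>a\<in>S. \<Sum>b\<in>S. \<Sum>c\<in>S. \<Sum>q\<in>Qs. g a b c q) = (\<Sum>q\<in>Qs. \<Sum>a\<in>S. \<Sum>b\<in>S. \<Sum>c\<in>S. (g a b c q :: real))"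
proof -
  have "(\<Sum>a\<in>S. \<Sum>b\<in>S. \<Sum>c\<in>S. \<Sum>q\<in>Qs. g a b c q) = (\<Sum>a\<in>S. \<Sum>b\<in>S. \<Sum>q\<in>Qs. \<Sum>c\<in>S. g a b c q)"
    by (intro sum.cong refl sum.swap)
  also have "\<dots> = (\<Sum>a\<in>S. \<Sum>q\<in>Qs. \<Sum>b\<in>S. \<Sum>c\<in>S. g a b c q)"
    by (intro sum.cong refl sum.swap)
  also have "\<dots> = (\<Sum>q\<in>Qs. \<Sum>a\<in>S. \<Sum>b\<in>S. \<Sum>c\<in>S. g a b c q)"
    by (rule sum.swap)
  finally show ?thesis .
qed




lemma expected_main:
  assumes l2: "l \<ge> 2" and pf: "\<forall>p\<in>prime_factors l. p mod 4 = 1"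
  shows "expected_N2 l = 2 ^ (card (prime_factors l) + 3) / real l ^ 2"
proof -
  define M where "M = int l ^ 2"
  define S where "S = {0..<M}"
  have l1: "l \<ge> 1" using l2 by simp
  have M0: "M > 0" unfolding M_def using l2 by simp
  have cO: "card (O2 l) = 2 ^ (card (prime_factors l) + 3)" using card_O2_main[OF l2 pf] .
  have finO: "finite (O2 l)" using cO by (metis card.infinite power_not_zero zero_neq_numeral)
  define I where "I = (\<lambda>(Q::rat^2^2) A B C. is_int_mat (transpose Q ** int_to_rat_mat (sym2 A B C) ** Q))"
  have N: "real (N2 l (sym2 A B C)) = (\<Sum>Q\<in>O2 l. if I Q A B C then 1 else 0)" for A B C
    unfolding N2_def I_def by (rule real_sum_ind[OF finO, symmetric])
  have inner: "(\<Sum>A\<in>S. \<Sum>B\<in>S. \<Sum>C\<in>S. if I Q A B C then 1 else 0) = (of_int M ^ 2 :: real)"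
    if Q: "Q \<in> O2 l" for Q
  proof -
    obtain x y e where xy: "(x,y) \<in> Pm (int l ^ 2)" and e: "e = 1 \<or> e = -1" and Qe: "Q = Phi l x y e"
      using O2_Phi[OF Q l1] by blast
    have s: "x^2 + y^2 = M" using xy unfolding Pm_def M_def by simp
    have cxy: "coprime x y" using xy unfolding Pm_def by simp
    have cM: "coprime x M" using coprime_x_m[OF cxy] s by simp
    have "(\<Sum>A\<in>S. \<Sum>B\<in>S. \<Sum>C\<in>S. if I Q A B C then 1 else 0)
        = (\<Sum>A\<in>S. \<Sum>B\<in>S. \<Sum>C\<in>S. (if M dvd x*(A-C) + 2* y* B then 1 else 0::real))"
      unfolding I_def Qe int_cond[OF xy l1 e] M_def ..
    also have "\<dots> = of_int M ^ 2" unfolding S_def by (rule count_Q[OF cM M0])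
    finally show ?thesis .
  qed
  have "(\<Sum>A\<in>S. \<Sum>B\<in>S. \<Sum>C\<in>S. real (N2 l (sym2 A B C)))
      = (\<Sum>A\<in>S. \<Sum>B\<in>S. \<Sum>C\<in>S. \<Sum>Q\<in>O2 l. if I Q A B C then 1 else 0)"
    unfolding N ..
  also have "\<dots> = (\<Sum>Q\<in>O2 l. \<Sum>A\<in>S. \<Sum>B\<in>S. \<Sum>C\<in>S. if I Q A B C then 1 else 0)"
    by (rule swap4)
  also have "\<dots> = (\<Sum>Q\<in>O2 l. (of_int M ^ 2 :: real))"
    by (rule sum.cong[OF refl]) (rule inner)
  also have "\<dots> = real (card (O2 l)) * of_int M ^ 2" by simp
  also have "\<dots> = 2 ^ (card (prime_factors l) + 3) * real l ^ 4" unfolding cO M_def by simp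
  finally have sum_eq: "(\<Sum>A\<in>S. \<Sum>B\<in>S. \<Sum>C\<in>S. real (N2 l (sym2 A B C))) = 2 ^ (card (prime_factors l) + 3) * real l ^ 4" .
  have "expected_N2 l = 2 ^ (card (prime_factors l) + 3) * real l ^ 4 / real l ^ 6"
    unfolding expected_N2_def sum_eq[unfolded S_def M_def] ..
  also have "\<dots> = 2 ^ (card (prime_factors l) + 3) / real l ^ 2"
  proof -
    have "real l ^ 6 = real l ^ 4 * real l ^ 2" by (simp add: power_add[symmetric])
    moreover have "real l \<noteq> 0" using l2 by simp
    ultimately show ?thesis by (simp add: field_simps)
  qed
  finally show ?thesis .
qed

theorem theorem1p6:
  fixes l :: nat
  assumes "l \<ge> 2"
  shows "(O2 l \<noteq> {} \<longleftrightarrow> (\<forall>p\<in>prime_factors l. p mod 4 = 1))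
    \<and> ((\<forall>p\<in>prime_factors l. p mod 4 = 1) \<longrightarrow>
         card (O2 l) = 2 ^ (card (prime_factors l) + 3)
       \<and> expected_N2 l = 2 ^ (card (prime_factors l) + 3) / real l ^ 2)"
proof (intro conjI impI)
  show "O2 l \<noteq> {} \<longleftrightarrow> (\<forall>p\<in>prime_factors l. p mod 4 = 1)"
  proof
    assume "O2 l \<noteq> {}" thus "\<forall>p\<in>prime_factors l. p mod 4 = 1" using O2_nonempty_imp assms by blast
  next
    assume h: "\<forall>p\<in>prime_factors l. p mod 4 = 1"
    have "card (O2 l) \<noteq> 0" using card_O2_main[OF assms h] by simp
    thus "O2 l \<noteq> {}" by auto
  qed
next
  assume h: "\<forall>p\<in>prime_factors l. p mod 4 = 1"
  show "card (O2 l) = 2 ^ (card (prime_factors l) + 3)" using card_O2_main[OF assms h] .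
  show "expected_N2 l = 2 ^ (card (prime_factors l) + 3) / real l ^ 2" using expected_main[OF assms h] .
qed


end
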